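(* Let $k$ be odd, $n=4k$, $d=\frac{(3^{2k}+1)^2}{20}$, $\alpha$ a primitive element of $\mathrm{GF}(3^n)$, $s_t=\mathrm{Tr}_1^n(\alpha^t)$, and for $0\le\tau\le 3^n-2$ let $C_d(\tau)=\sum_{t=0}^{3^n-2}\omega^{s_{t+\tau}-s_{dt}}$. Put $a=\alpha^\tau$ and let $r$ be a nonsquare in $\mathrm{GF}(3^4)$ (viewed inside $\mathrm{GF}(3^n)$). Then $$C_d(\tau)=-1+S_d(\tau),\qquad S_d(\tau)=\sum_{x\in\mathrm{GF}(3^n)}\omega^{\mathrm{Tr}_1^n(ax-x^d)},$$ and $$2S_d(\tau)=\sum_{x\in\mathrm{GF}(3^n)}\omega^{q_1(x)}+\sum_{x\in\mathrm{GF}(3^n)}\omega^{q_2(x)},$$ where $$q_1(x)=\mathrm{Tr}_1^n\big(a x^{3^{2(k+1)}+1}-x^{3^{2k}+1}\big),\qquad q_2(x)=\mathrm{Tr}_1^n\big(a r x^{3^{2(k+1)}+1}-r^{d}x^{3^{2k}+1}\big).$$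
   Context: $\omega=e^{2\pi\sqrt{-1}/3}$. $\mathrm{Tr}_1^n(x)=x+x^3+\cdots+x^{3^{n-1}}$ is the absolute trace from $\mathrm{GF}(3^n)$ to $\mathrm{GF}(3)$, and values in $\mathrm{GF}(3)=\mathbb{Z}/3\mathbb{Z}$ are used as exponents of $\omega$. *)

theory Defs
  imports Complex_Main
begin

definition abs_tr :: "nat \<Rightarrow> 'a::field \<Rightarrow> 'a" where
  "abs_tr n x = (\<Sum>i<n. x ^ (3 ^ i))"

text \<open>Identification of the prime field GF(3) with Z/3Z = {0,1,2} (used as exponents of omega).\<close>
definition gf3_val :: "'a::field \<Rightarrow> nat" where
  "gf3_val y = (THE j. j < 3 \<and> y = of_nat j)"

definition omega :: complex where
  "omega = cis (2 * pi / 3)"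

definition primitive_elem :: "'a::field \<Rightarrow> bool" where
  "primitive_elem \<alpha> \<longleftrightarrow> (\<forall>y. y \<noteq> 0 \<longrightarrow> (\<exists>i::nat. y = \<alpha> ^ i))"

end

theory Submission imports Defs "HOL-Number_Theory.Number_Theory" begin

lemma card_zero_char:
  fixes dummy :: "'a::{field,finite}"
  shows "(of_nat (card (UNIV::'a set)) :: 'a) = 0"
proof -
  have "(\<Sum>y\<in>(UNIV::'a set). y + 1) = (\<Sum>y\<in>UNIV. y)"
  proof -
    have b: "bij (\<lambda>y::'a. y + 1)"
      by (metis (no_types, lifting) add_diff_cancel bij_betw_byWitness diff_add_cancel surj_def top_greatest)
    show ?thesis using sum.reindex_bij_betw[OF b, of "\<lambda>y. y"] by simp
  qed
  moreover have "(\<Sum>y\<in>(UNIV::'a set). y + 1) = (\<Sum>y\<in>UNIV. y) + of_nat (card (UNIV::'a set))"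
    by (simp add: sum.distrib)
  ultimately show ?thesis by simp
qed

lemma char3:
  assumes "card (UNIV::'a::{field,finite} set) = 3 ^ n"
  shows "(3::'a) = 0"
proof -
  have "(of_nat (3^n)::'a) = 0" using card_zero_char[where 'a='a] assms by simp
  hence "(3::'a)^n = 0" by simp
  thus ?thesis by simp
qed

lemma nonzero_pow_card:
  fixes x :: "'a::{field,finite}"
  assumes "x \<noteq> 0"
  shows "x ^ (card (UNIV::'a set) - 1) = 1"
proof -
  let ?U = "UNIV - {0::'a}"
  have cU: "card ?U = card (UNIV::'a set) - 1" by (simp add: card_Diff_singleton)
  have b: "bij_betw (\<lambda>y. x * y) ?U ?U"
    apply (rule bij_betw_byWitness[where f'="\<lambda>y. y / x"])
    using assms by auto
  have "(\<Prod>y\<in>?U. x * y) = (\<Prod>y\<in>?U. y)"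
    using prod.reindex_bij_betw[OF b, of "\<lambda>y. y"] by simp
  moreover have "(\<Prod>y\<in>?U. x * y) = x ^ card ?U * (\<Prod>y\<in>?U. y)"
    by (simp add: prod.distrib)
  moreover have "(\<Prod>y\<in>?U. y) \<noteq> 0" by simp
  ultimately show ?thesis using cU by simp
qed


lemma frob_add:
  fixes x y :: "'a::field" assumes c3: "(3::'a) = 0"
  shows "(x + y) ^ 3 = x ^ 3 + y ^ 3"
proof -
  have "(x + y) ^ 3 = x^3 + y^3 + 3 * (x^2*y + x*y^2)"
    by (simp add: power2_eq_square power3_eq_cube algebra_simps)
  thus ?thesis using c3 by simp
qed

lemma frob_neg:
  fixes x :: "'a::field"
  shows "(- x) ^ (3^i) = - (x ^ (3^i))"
  by (simp add: power_minus_odd)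

lemma frob_pow_add:
  fixes x y :: "'a::field" assumes c3: "(3::'a) = 0"
  shows "(x + y) ^ (3^i) = x ^ (3^i) + y ^ (3^i)"
proof (induction i)
  case 0 then show ?case by simp
next
  case (Suc i)
  have "(x + y) ^ (3^Suc i) = ((x + y) ^ (3^i))^3" by (simp add: power_mult[symmetric] mult.commute)
  also have "\<dots> = (x ^ (3^i))^3 + (y ^ (3^i))^3" using Suc frob_add[OF c3] by simp
  also have "\<dots> = x ^ (3^Suc i) + y ^ (3^Suc i)" by (simp add: power_mult[symmetric] mult.commute)
  finally show ?case .
qed

lemma frob_pow_diff:
  fixes x y :: "'a::field" assumes c3: "(3::'a) = 0"
  shows "(x - y) ^ (3^i) = x ^ (3^i) - y ^ (3^i)"
  using frob_pow_add[OF c3, of x "-y" i] frob_neg[of y i] by simp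

lemma frob_pow_sum:
  fixes f :: "'b \<Rightarrow> 'a::field" assumes c3: "(3::'a) = 0"
  shows "(sum f A) ^ (3^i) = (\<Sum>j\<in>A. (f j) ^ (3^i))"
proof (induction A rule: infinite_finite_induct)
  case (infinite A) then show ?case by simp
next
  case empty then show ?case by simp
next
  case (insert x F) then show ?case by (simp add: frob_pow_add[OF c3])
qed

lemma tr_add:
  fixes x y :: "'a::field" assumes c3: "(3::'a) = 0"
  shows "abs_tr n (x + y) = abs_tr n x + abs_tr n y"
  unfolding abs_tr_def by (simp add: frob_pow_add[OF c3] sum.distrib)

lemma tr_diff:
  fixes x y :: "'a::field" assumes c3: "(3::'a) = 0"
  shows "abs_tr n (x - y) = abs_tr n x - abs_tr n y"
  unfolding abs_tr_def by (simp add: frob_pow_diff[OF c3] sum_subtractf)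

lemma tr_zero: "abs_tr n (0::'a::field) = 0"
  unfolding abs_tr_def by (simp add: zero_power)

lemma tr_cube:
  fixes x :: "'a::field" assumes c3: "(3::'a) = 0" and fx: "x ^ (3^n) = x"
  shows "(abs_tr n x) ^ 3 = abs_tr n x"
proof -
  have "(abs_tr n x) ^ 3 = (abs_tr n x) ^ (3^1)" by simp
  also have "\<dots> = (\<Sum>i<n. x ^ (3^(Suc i)))"
    unfolding abs_tr_def frob_pow_sum[OF c3] by (simp add: power_mult[symmetric] mult.commute)
  also have "\<dots> = (\<Sum>i<Suc n. x ^ (3^i)) - x"
    by (simp only: sum.lessThan_Suc_shift[of "\<lambda>i. x ^ (3^i)" n]) simp
  also have "\<dots> = abs_tr n x"
    unfolding abs_tr_def using fx by simp
  finally show ?thesis .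
qed

lemma f3_cases:
  fixes z :: "'a::field" assumes c3: "(3::'a) = 0" and z: "z ^ 3 = z"
  shows "z = of_nat 0 \<or> z = of_nat 1 \<or> z = of_nat 2"
proof -
  have m1: "(-1::'a) = 2" using c3 by (simp add: eq_neg_iff_add_eq_0)
  have "z * (z - 1) * (z + 1) = z^3 - z"
    by (simp add: power3_eq_cube algebra_simps)
  hence "z * (z - 1) * (z + 1) = 0" using z by simp
  hence "z = 0 \<or> z = 1 \<or> z = -1" by (simp add: eq_neg_iff_add_eq_0)
  thus ?thesis using m1 by auto
qed

lemma of_nat_inj3:
  assumes c3: "(3::'a::field) = 0" and "i < 3" "j < 3" "(of_nat i::'a) = of_nat j"
  shows "i = j"
proof -
  have m1: "(2::'a) = -1" using c3 by (simp add: eq_neg_iff_add_eq_0)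
  have n2: "(2::'a) \<noteq> 0" "(0::'a) \<noteq> 2" using m1
    by (metis neg_equal_0_iff_equal one_neq_zero)+
  have n21: "(2::'a) \<noteq> 1" "(1::'a) \<noteq> 2" using m1
    by (metis add_diff_cancel_left' c3 diff_numeral_special(9) numeral_One one_add_one one_plus_numeral zero_neq_one)+
  have i: "i = 0 \<or> i = 1 \<or> i = 2" using assms(2) by linarith
  have j: "j = 0 \<or> j = 1 \<or> j = 2" using assms(3) by linarith
  from i j assms(4) n2 n21 show ?thesis
    by (elim disjE) simp_all
qed

lemma gf3_of_nat:
  assumes c3: "(3::'a::field) = 0" and "j < 3"
  shows "gf3_val (of_nat j :: 'a) = j"
  unfolding gf3_val_def
proof (rule the_equality)
  show "j < 3 \<and> (of_nat j::'a) = of_nat j" using assms(2) by simp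
next
  fix y assume "y < 3 \<and> (of_nat j::'a) = of_nat y"
  thus "y = j" using of_nat_inj3[OF c3, of y j] assms(2) by simp
qed

lemma gf3_props:
  fixes z :: "'a::field" assumes c3: "(3::'a) = 0" and z: "z ^ 3 = z"
  shows "gf3_val z < 3 \<and> of_nat (gf3_val z) = z"
proof -
  have "\<exists>j. j < 3 \<and> z = of_nat j"
    using f3_cases[OF c3 z]
    apply (elim disjE)
    subgoal by (rule exI[of _ 0]) simp
    subgoal by (rule exI[of _ 1]) simp
    subgoal by (rule exI[of _ 2]) simp
    done
  then obtain j where j: "j < 3" "z = of_nat j" by blast
  thus ?thesis using gf3_of_nat[OF c3 j(1)] by simp
qed

lemma of_nat_mod3:
  assumes c3: "(3::'a::field) = 0"
  shows "(of_nat (m mod 3) :: 'a) = of_nat m"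
proof -
  have "m = 3 * (m div 3) + m mod 3" by simp
  hence "(of_nat m :: 'a) = 3 * of_nat (m div 3) + of_nat (m mod 3)"
    by (metis of_nat_add of_nat_mult of_nat_numeral)
  thus ?thesis using c3 by simp
qed

lemma gf3_diff:
  fixes u v :: "'a::field" assumes c3: "(3::'a) = 0" and u: "u ^ 3 = u" and v: "v ^ 3 = v"
  shows "gf3_val (u - v) = (gf3_val u + 2 * gf3_val v) mod 3"
proof -
  have "(of_nat ((gf3_val u + 2 * gf3_val v) mod 3) :: 'a) = u + 2 * v"
  proof -
    have "(of_nat ((gf3_val u + 2 * gf3_val v) mod 3) :: 'a) = of_nat (gf3_val u + 2 * gf3_val v)"
      by (rule of_nat_mod3[OF c3])
    also have "\<dots> = of_nat (gf3_val u) + 2 * of_nat (gf3_val v)" by simp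
    also have "\<dots> = u + 2 * v" using gf3_props[OF c3 u] gf3_props[OF c3 v] by simp
    finally show ?thesis .
  qed
  also have "\<dots> = u - v + 3 * v"
  proof -
    have "(3::'a) * v = 2 * v + v" by (simp add: distrib_right[symmetric])
    then show ?thesis by simp
  qed
  also have "\<dots> = u - v" using c3 by simp
  finally show ?thesis using gf3_of_nat[OF c3, of "(gf3_val u + 2 * gf3_val v) mod 3"] by simp
qed

lemma omega3: "omega ^ 3 = 1"
  unfolding omega_def DeMoivre by simp

lemma omega_nz: "omega \<noteq> 0"
  using omega3 by auto

lemma omega_mod: "omega ^ m = omega ^ (m mod 3)"
proof -
  have "omega ^ m = omega ^ (3 * (m div 3) + m mod 3)" by simp
  also have "\<dots> = omega ^ (m mod 3)" by (simp only: power_add power_mult omega3) simp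
  finally show ?thesis .
qed

lemma omega_powi: "omega powi (int a - int b) = omega ^ ((a + 2 * b) mod 3)"
proof -
  have "omega powi (int a - int b) = omega ^ a / omega ^ b"
    by (simp add: power_int_diff omega_nz)
  also have "\<dots> = omega ^ (a + 2 * b)"
  proof -
    have "omega ^ (a + 2*b) * omega ^ b = omega ^ (a + 3 * b)"
      by (simp add: power_add[symmetric] add.commute add.left_commute)
    also have "\<dots> = omega ^ a * (omega ^ 3) ^ b"
      by (simp add: power_add power_mult)
    finally have "omega ^ (a + 2*b) * omega ^ b = omega ^ a * (omega ^ 3) ^ b" .
    thus ?thesis using omega_nz omega3 by (simp add: field_simps)
  qed
  also have "\<dots> = omega ^ ((a + 2 * b) mod 3)" by (rule omega_mod)
  finally show ?thesis .
qed


lemma bez_coprime: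
  fixes a b x y :: int assumes "a * x + b * y = 1" shows "coprime a b"
proof (rule coprimeI)
  fix c assume "c dvd a" "c dvd b"
  hence "c dvd a * x + b * y" by simp
  thus "is_unit c" using assms by simp
qed

lemma nine_pow_odd:
  assumes "odd k" shows "\<exists>z. (9::nat) ^ k = 80 * z + 9"
proof -
  obtain m where k: "k = 2 * m + 1" using assms oddE by blast
  have "[(81::nat) ^ m = 1 ^ m] (mod 80)" by (rule cong_pow) (simp add: cong_def)
  hence h: "(81::nat) ^ m mod 80 = 1" by (simp add: cong_def)
  have "(9::nat) ^ k = 9 * 81 ^ m" by (simp add: k power_mult power_add)
  hence "(9::nat) ^ k mod 80 = 9" using h by (simp add: mod_mult_right_eq[of 9 "81^m" 80, symmetric])
  thus ?thesis by (metis mod_div_mult_eq mult.commute add.commute)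
qed

lemma coprime_e':
  fixes z :: nat
  shows "coprime (360 * z + 41) (6400 * z^2 + 1440 * z + 80)"
proof -
  have f: "(6400 * z^2 + 1440 * z + 80) = 2^4 * 5 * ((8*z+1) * (10*z+1))"
    by (simp add: power2_eq_square algebra_simps)
  have c1: "coprime (int (360 * z + 41)) (int (8*z+1))"
    by (rule bez_coprime[of _ "2 * int z" _ "1 - 90 * int z"]) (simp add: algebra_simps)
  have c2: "coprime (int (360 * z + 41)) (int (10*z+1))"
    by (rule bez_coprime[of _ "- 2 * int z" _ "1 + 72 * int z"]) (simp add: algebra_simps)
  have c3: "coprime (int (360 * z + 41)) 2"
    by (rule bez_coprime[of _ 1 _ "- (180 * int z + 20)"]) (simp add: algebra_simps)
  have c4: "coprime (int (360 * z + 41)) 5"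
    by (rule bez_coprime[of _ 1 _ "- (72 * int z + 8)"]) (simp add: algebra_simps)
  have "coprime (360 * z + 41) (8*z+1)" "coprime (360 * z + 41) (10*z+1)"
       "coprime (360 * z + 41) 2" "coprime (360 * z + 41) 5"
    using c1 c2 c3 c4 coprime_int_iff by (metis of_nat_numeral)+
  thus ?thesis apply (subst f) by (simp only: coprime_mult_right_iff coprime_power_right_iff) simp
qed

lemma ed_eq:
  fixes z :: nat
  shows "(720 * z + 82) * (320 * z^2 + 80 * z + 5) = (80 * z + 10) + (6400 * z^2 + 1440 * z + 80) * (36 * z + 5)"
  by (simp add: power2_eq_square algebra_simps)

lemma d_eq:
  fixes z :: nat
  shows "(80 * z + 10) ^ 2 div 20 = 320 * z^2 + 80 * z + 5"
proof -
  have "(80 * z + 10) ^ 2 = 20 * (320 * z^2 + 80 * z + 5)" by (simp add: power2_eq_square algebra_simps)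
  thus ?thesis by simp
qed


lemma pow_modN:
  fixes x :: "'a::{field,finite}"
  assumes "x \<noteq> 0"
  shows "x ^ m = x ^ (m mod (card (UNIV::'a set) - 1))"
proof -
  let ?N = "card (UNIV::'a set) - 1"
  have "x ^ m = x ^ (?N * (m div ?N) + m mod ?N)" by simp
  also have "\<dots> = (x ^ ?N) ^ (m div ?N) * x ^ (m mod ?N)" by (simp only: power_add power_mult)
  also have "\<dots> = x ^ (m mod ?N)" using nonzero_pow_card[OF assms] by simp
  finally show ?thesis .
qed

lemma card_ge3:
  assumes c3: "(3::'a::{field,finite}) = 0"
  shows "card (UNIV::'a set) \<ge> 3"
proof -
  have m1: "(2::'a) = -1" using c3 by (simp add: eq_neg_iff_add_eq_0)
  have "(-1::'a) \<noteq> 1" using m1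
    by (metis add_diff_cancel_left' c3 diff_numeral_special(9) numeral_One one_add_one one_plus_numeral zero_neq_one)
  hence "card {0, 1, -1::'a} = 3" by auto
  moreover have "card {0, 1, -1::'a} \<le> card (UNIV::'a set)" by (rule card_mono) auto
  ultimately show ?thesis by simp
qed

lemma alpha_nz:
  assumes c3: "(3::'a::{field,finite}) = 0" and p: "primitive_elem (\<alpha>::'a)"
  shows "\<alpha> \<noteq> 0"
proof
  assume a0: "\<alpha> = 0"
  have "\<forall>y::'a. y \<in> {0, 1}"
  proof
    fix y :: 'a
    show "y \<in> {0,1}"
    proof (cases "y = 0")
      case False
      then obtain i where "y = \<alpha> ^ i" using p unfolding primitive_elem_def by blast
      thus ?thesis using a0 by (cases i) auto
    qed simp
  qed
  hence "(UNIV::'a set) \<subseteq> {0,1}" by blast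
  hence "card (UNIV::'a set) \<le> 2" by (metis card_2_iff card_mono finite.emptyI finite.insertI zero_neq_one)
  thus False using card_ge3[OF c3] by simp
qed

lemma alpha_bij:
  assumes c3: "(3::'a::{field,finite}) = 0" and p: "primitive_elem (\<alpha>::'a)"
  shows "bij_betw (\<lambda>i. \<alpha> ^ i) {..<card (UNIV::'a set) - 1} (UNIV - {0})"
proof -
  let ?N = "card (UNIV::'a set) - 1"
  have a0: "\<alpha> \<noteq> 0" by (rule alpha_nz[OF c3 p])
  have Npos: "?N > 0" using card_ge3[OF c3] by simp
  have img: "(\<lambda>i. \<alpha> ^ i) ` {..<?N} = UNIV - {0}"
  proof
    show "(\<lambda>i. \<alpha> ^ i) ` {..<?N} \<subseteq> UNIV - {0}" using a0 by auto
    show "UNIV - {0} \<subseteq> (\<lambda>i. \<alpha> ^ i) ` {..<?N}"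
    proof
      fix y :: 'a assume "y \<in> UNIV - {0}"
      then obtain i where "y = \<alpha> ^ i" using p unfolding primitive_elem_def by blast
      hence "y = \<alpha> ^ (i mod ?N)" using pow_modN[OF a0] by simp
      moreover have "i mod ?N < ?N" using Npos by simp
      ultimately show "y \<in> (\<lambda>i. \<alpha> ^ i) ` {..<?N}" by blast
    qed
  qed
  have "card ((\<lambda>i. \<alpha> ^ i) ` {..<?N}) = card {..<?N}"
    unfolding img by (simp add: card_Diff_singleton)
  hence "inj_on (\<lambda>i. \<alpha> ^ i) {..<?N}" by (rule eq_card_imp_inj_on[rotated]) simp
  thus ?thesis using img by (simp add: bij_betw_def)
qed

lemma alpha_one_dvd:
  assumes c3: "(3::'a::{field,finite}) = 0" and p: "primitive_elem (\<alpha>::'a)"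
    and "\<alpha> ^ m = 1"
  shows "(card (UNIV::'a set) - 1) dvd m"
proof -
  let ?N = "card (UNIV::'a set) - 1"
  have a0: "\<alpha> \<noteq> 0" by (rule alpha_nz[OF c3 p])
  have Npos: "?N > 0" using card_ge3[OF c3] by simp
  have inj: "inj_on (\<lambda>i. \<alpha> ^ i) {..<?N}" using alpha_bij[OF c3 p] by (simp add: bij_betw_def)
  have "\<alpha> ^ (m mod ?N) = \<alpha> ^ 0" using assms(3) pow_modN[OF a0, of m] by simp
  hence "m mod ?N = 0" using inj_onD[OF inj] Npos by simp
  thus ?thesis by (simp add: mod_eq_0_iff_dvd)
qed

lemma sum_univ_alpha:
  assumes c3: "(3::'a::{field,finite}) = 0" and p: "primitive_elem (\<alpha>::'a)"
  shows "(\<Sum>x\<in>(UNIV::'a set). G x) = G 0 + (\<Sum>i<card (UNIV::'a set) - 1. G (\<alpha> ^ i))"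
proof -
  have "(\<Sum>x\<in>(UNIV::'a set). G x) = G 0 + (\<Sum>x\<in>UNIV - {0}. G x)"
    by (simp add: sum.remove[of UNIV 0])
  also have "(\<Sum>x\<in>UNIV - {0}. G x) = (\<Sum>i<card (UNIV::'a set) - 1. G (\<alpha> ^ i))"
    using sum.reindex_bij_betw[OF alpha_bij[OF c3 p], of G] by simp
  finally show ?thesis .
qed

lemma sum_lessThan_plus:
  fixes m n :: nat shows "(\<Sum>i<m + n. f i) = (\<Sum>i<m. f i) + (\<Sum>i<n. f (m + i))"
  by (induction n) (simp_all add: add.assoc)

lemma sum_even_odd:
  fixes M :: nat shows "(\<Sum>i<2 * M. f i) = (\<Sum>i<M. f (2 * i)) + (\<Sum>i<M. f (2 * i + 1))"
proof (induction M)
  case 0 then show ?case by simp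
next
  case (Suc M)
  have "2 * Suc M = Suc (Suc (2 * M))" by simp
  then show ?case using Suc by (simp add: algebra_simps)
qed

lemma sum_shift_periodic:
  fixes M c :: nat and g :: "nat \<Rightarrow> 'b::ab_group_add" assumes per: "\<And>i. g (i + M) = g i"
  shows "(\<Sum>i<M. g (c + i)) = (\<Sum>i<M. g i)"
proof (induction c)
  case 0 then show ?case by simp
next
  case (Suc c)
  have "(\<Sum>i<Suc M. g (c + i)) = g (c + 0) + (\<Sum>i<M. g (c + Suc i))"
    by (rule sum.lessThan_Suc_shift)
  moreover have "(\<Sum>i<Suc M. g (c + i)) = (\<Sum>i<M. g (c + i)) + g (c + M)" by simp
  moreover have "g (c + M) = g c" using per by simp
  ultimately have "(\<Sum>i<M. g (Suc c + i)) = (\<Sum>i<M. g (c + i))"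
    by (simp add: add.commute)
  then show ?case using Suc by simp
qed


lemma sq_split:
  fixes H :: "'a::{field,finite} \<Rightarrow> complex"
  assumes c3: "(3::'a) = 0" and p: "primitive_elem (\<alpha>::'a)"
    and NM: "card (UNIV::'a set) - 1 = 2 * M"
    and r: "r = \<alpha> ^ j" and oj: "odd j"
  shows "(\<Sum>z\<in>UNIV. H (z^2)) + (\<Sum>z\<in>UNIV. H (r * z^2)) = 2 * (\<Sum>x\<in>UNIV. H x)"
proof -
  have a0: "\<alpha> \<noteq> 0" by (rule alpha_nz[OF c3 p])
  have aN: "\<alpha> ^ (2 * M) = 1" using nonzero_pow_card[OF a0] NM by simp
  have per: "\<alpha> ^ (2 * M + m) = \<alpha> ^ m" for m using aN by (simp add: power_add)
  have sq: "(\<alpha> ^ i)^2 = \<alpha> ^ (2 * i)" for i by (simp add: power_mult[symmetric] mult.commute)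
  have s1: "(\<Sum>z\<in>UNIV. H (z^2)) = H 0 + 2 * (\<Sum>i<M. H (\<alpha> ^ (2*i)))"
  proof -
    have "(\<Sum>z\<in>UNIV. H (z^2)) = H (0^2) + (\<Sum>i<M + M. H ((\<alpha> ^ i)^2))"
      using sum_univ_alpha[OF c3 p, of "\<lambda>z. H (z^2)"] NM by (simp add: mult_2)
    also have "(\<Sum>i<M + M. H ((\<alpha> ^ i)^2)) = (\<Sum>i<M. H (\<alpha> ^ (2*i))) + (\<Sum>i<M. H (\<alpha> ^ (2*(M+i))))"
      by (simp add: sum_lessThan_plus sq)
    also have "(\<Sum>i<M. H (\<alpha> ^ (2*(M+i)))) = (\<Sum>i<M. H (\<alpha> ^ (2*i)))"
      using per by (simp add: distrib_left)
    finally show ?thesis by simp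
  qed
  have s2: "(\<Sum>z\<in>UNIV. H (r * z^2)) = H 0 + 2 * (\<Sum>i<M. H (\<alpha> ^ (j + 2*i)))"
  proof -
    have rr: "r * (\<alpha> ^ i)^2 = \<alpha> ^ (j + 2 * i)" for i by (simp add: r sq power_add)
    have "(\<Sum>z\<in>UNIV. H (r * z^2)) = H (r * 0^2) + (\<Sum>i<M + M. H (r * (\<alpha> ^ i)^2))"
      using sum_univ_alpha[OF c3 p, of "\<lambda>z. H (r * z^2)"] NM by (simp add: mult_2)
    also have "(\<Sum>i<M + M. H (r * (\<alpha> ^ i)^2)) = (\<Sum>i<M. H (\<alpha> ^ (j + 2*i))) + (\<Sum>i<M. H (\<alpha> ^ (j + 2*(M+i))))"
      by (simp add: sum_lessThan_plus rr)
    also have "(\<Sum>i<M. H (\<alpha> ^ (j + 2*(M+i)))) = (\<Sum>i<M. H (\<alpha> ^ (j + 2*i)))"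
    proof -
      have e: "\<alpha> ^ (j + 2*(M+i)) = \<alpha> ^ (j + 2*i)" for i
      proof -
        have "j + 2*(M+i) = 2 * M + (j + 2 * i)" by simp
        thus ?thesis using per by metis
      qed
      show ?thesis by (simp only: e)
    qed
    finally show ?thesis by simp
  qed
  obtain c where jc: "j = 2 * c + 1" using oj oddE by blast
  have s3: "(\<Sum>i<M. H (\<alpha> ^ (j + 2*i))) = (\<Sum>i<M. H (\<alpha> ^ (2*i+1)))"
  proof -
    have "(\<Sum>i<M. H (\<alpha> ^ (j + 2*i))) = (\<Sum>i<M. (\<lambda>t. H (\<alpha> ^ (2*t+1))) (c + i))"
      by (simp add: jc algebra_simps)
    also have "\<dots> = (\<Sum>i<M. (\<lambda>t. H (\<alpha> ^ (2*t+1))) i)"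
    proof (rule sum_shift_periodic)
      fix i
      have "2 * (i + M) + 1 = 2 * M + (2 * i + 1)" by simp
      thus "H (\<alpha> ^ (2 * (i + M) + 1)) = H (\<alpha> ^ (2 * i + 1))" using per by metis
    qed
    finally show ?thesis by simp
  qed
  have s4: "(\<Sum>x\<in>UNIV. H x) = H 0 + (\<Sum>i<M. H (\<alpha> ^ (2*i))) + (\<Sum>i<M. H (\<alpha> ^ (2*i+1)))"
    using sum_univ_alpha[OF c3 p, of H] NM sum_even_odd[of "\<lambda>i. H (\<alpha> ^ i)" M] by simp
  show ?thesis using s1 s2 s3 s4 by (simp add: algebra_simps)
qed


theorem lemma1:
  fixes \<alpha> r :: "'a::{field,finite}" and k n d \<tau> :: nat
  assumes "odd k"
    and "n = 4 * k"
    and "card (UNIV::'a set) = 3 ^ n"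
    and "d = (3 ^ (2 * k) + 1) ^ 2 div 20"
    and "primitive_elem \<alpha>"
    and "\<tau> \<le> 3 ^ n - 2"
    and "r ^ (3 ^ 4) = r"
    and "\<not> (\<exists>y. y ^ (3 ^ 4) = y \<and> y ^ 2 = r)"
  shows "(let a = \<alpha> ^ \<tau>;
              s = (\<lambda>t. gf3_val (abs_tr n (\<alpha> ^ t)));
              C = (\<Sum>t<3 ^ n - 1. omega powi (int (s (t + \<tau>)) - int (s (d * t))));
              S = (\<Sum>x\<in>(UNIV::'a set). omega ^ gf3_val (abs_tr n (a * x - x ^ d)));
              q1 = (\<lambda>x. gf3_val (abs_tr n (a * x ^ (3 ^ (2 * (k + 1)) + 1) - x ^ (3 ^ (2 * k) + 1))));
              q2 = (\<lambda>x. gf3_val (abs_tr n (a * r * x ^ (3 ^ (2 * (k + 1)) + 1)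
                                            - r ^ d * x ^ (3 ^ (2 * k) + 1))))
          in C = -1 + S \<and>
             2 * S = (\<Sum>x\<in>(UNIV::'a set). omega ^ q1 x) + (\<Sum>x\<in>(UNIV::'a set). omega ^ q2 x))"
proof -
  note p = assms(5)
  have c3: "(3::'a) = 0" using char3[OF assms(3)] .
  obtain z where qz: "(9::nat) ^ k = 80 * z + 9" using nine_pow_odd[OF assms(1)] by blast
  have q2k: "(3::nat) ^ (2 * k) = 80 * z + 9" using qz by (simp add: power_mult)
  have E: "(3::nat) ^ (2 * (k + 1)) + 1 = 2 * (360 * z + 41)"
  proof -
    have "(3::nat) ^ (2 * (k + 1)) = 9 * 9 ^ k" by (simp add: power_mult)
    thus ?thesis using qz by simp
  qed
  have dd: "d = 320 * z^2 + 80 * z + 5"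
  proof -
    have "(3::nat)^(2*k)+1 = 80*z+10" using q2k by simp
    thus ?thesis unfolding assms(4) by (simp only: d_eq)
  qed
  have c3n: "(3::nat) ^ n = 6400 * z^2 + 1440 * z + 81"
  proof -
    have "(3::nat) ^ n = (3 ^ (2 * k)) ^ 2" using assms(2) by (simp add: power_mult[symmetric])
    thus ?thesis using q2k by (simp add: power2_eq_square algebra_simps)
  qed
  define N where "N = card (UNIV::'a set) - 1"
  have NN: "N = 6400 * z^2 + 1440 * z + 80" using assms(3) c3n N_def by simp
  have N3: "N = 3 ^ n - 1" using assms(3) N_def by simp
  have xN: "x ^ N = 1" if "x \<noteq> 0" for x :: 'a using nonzero_pow_card[OF that] N_def by simp
  have xQ: "x ^ (3 ^ n) = x" for x :: 'a
  proof (cases "x = 0")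
    case True thus ?thesis by simp
  next
    case False
    have "(3::nat) ^ n = Suc N" using NN c3n by simp
    thus ?thesis using xN[OF False] by simp
  qed
  have tr3: "(abs_tr n x) ^ 3 = abs_tr n x" for x :: 'a by (rule tr_cube[OF c3 xQ])
  define a where "a = \<alpha> ^ \<tau>"
  define H where "H = (\<lambda>x::'a. omega ^ gf3_val (abs_tr n (a * x - x ^ d)))"
  have dpos: "d > 0" using dd by simp
  have H0: "H 0 = 1"
  proof -
    have "gf3_val (0::'a) = 0" using gf3_of_nat[OF c3, of 0] by simp
    thus ?thesis unfolding H_def using dpos by (simp add: tr_zero zero_power)
  qed
  have P1: "(\<Sum>t<3 ^ n - 1. omega powi (int (gf3_val (abs_tr n (\<alpha> ^ (t + \<tau>))))
             - int (gf3_val (abs_tr n (\<alpha> ^ (d * t)))))) = -1 + (\<Sum>x\<in>UNIV. H x)"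
  proof -
    have tm: "omega powi (int (gf3_val (abs_tr n (\<alpha> ^ (t + \<tau>))))
             - int (gf3_val (abs_tr n (\<alpha> ^ (d * t))))) = H (\<alpha> ^ t)" for t
    proof -
      have e1: "\<alpha> ^ (t + \<tau>) = a * \<alpha> ^ t" by (simp add: a_def power_add)
      have e2: "\<alpha> ^ (d * t) = (\<alpha> ^ t) ^ d" by (simp add: power_mult[symmetric] mult.commute)
      have "omega powi (int (gf3_val (abs_tr n (\<alpha> ^ (t + \<tau>))))
             - int (gf3_val (abs_tr n (\<alpha> ^ (d * t)))))
          = omega ^ ((gf3_val (abs_tr n (a * \<alpha> ^ t)) + 2 * gf3_val (abs_tr n ((\<alpha> ^ t) ^ d))) mod 3)"
        unfolding e1 e2 by (rule omega_powi)
      also have "\<dots> = omega ^ gf3_val (abs_tr n (a * \<alpha> ^ t) - abs_tr n ((\<alpha> ^ t) ^ d))"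
        using gf3_diff[OF c3 tr3 tr3] by simp
      also have "\<dots> = H (\<alpha> ^ t)" unfolding H_def by (simp add: tr_diff[OF c3])
      finally show ?thesis .
    qed
    have "(\<Sum>x\<in>UNIV. H x) = H 0 + (\<Sum>t<N. H (\<alpha> ^ t))"
      using sum_univ_alpha[OF c3 p, of H] N_def by simp
    thus ?thesis using tm H0 N3 by simp
  qed
  define e' where "e' = 360 * z + 41"
  have cop: "coprime e' N" unfolding e'_def NN by (rule coprime_e')
  obtain u v where uv: "e' * u = N * v + gcd e' N" using bezout_nat[of e' N] e'_def by auto
  hence uv1: "e' * u = N * v + 1" using cop by simp
  have phi_surj: "surj (\<lambda>x::'a. x ^ e')"
  proof -
    have "y = (y ^ u) ^ e'" for y :: 'a
    proof (cases "y = 0")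
      case True
      have "e' * u > 0" using uv1 by simp
      thus ?thesis using True by (simp add: power_mult[symmetric] mult.commute)
    next
      case False
      have "(y ^ u) ^ e' = y ^ (e' * u)" by (simp add: power_mult[symmetric] mult.commute)
      also have "\<dots> = (y ^ N) ^ v * y" by (simp add: uv1 power_add power_mult)
      finally show ?thesis using xN[OF False] by simp
    qed
    thus ?thesis by (metis surjI)
  qed
  have phi_bij: "bij (\<lambda>x::'a. x ^ e')"
    using phi_surj finite_UNIV_surj_inj[OF finite_UNIV phi_surj] by (simp add: bij_def)
  have powE: "x ^ (3 ^ (2 * (k + 1)) + 1) = (x ^ e') ^ 2" for x :: 'a
    unfolding E e'_def by (simp add: power_mult[symmetric] mult.commute)
  have powD: "(x ^ (3 ^ (2 * (k + 1)) + 1)) ^ d = x ^ (3 ^ (2 * k) + 1)" for x :: 'a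
  proof -
    have ex: "(3 ^ (2 * (k + 1)) + 1) * d = (3 ^ (2 * k) + 1) + N * (36 * z + 5)"
      unfolding E dd q2k NN using ed_eq[of z] by simp
    show ?thesis
    proof (cases "x = 0")
      case True thus ?thesis using dpos by simp
    next
      case False
      have "(x ^ (3 ^ (2 * (k + 1)) + 1)) ^ d = x ^ ((3 ^ (2 * (k + 1)) + 1) * d)"
        by (rule power_mult[symmetric])
      also have "\<dots> = x ^ (3 ^ (2 * k) + 1) * (x ^ N) ^ (36 * z + 5)"
        unfolding ex by (simp add: power_add power_mult)
      finally show ?thesis using xN[OF False] by simp
    qed
  qed
  have Q1: "(\<Sum>x\<in>UNIV. omega ^ gf3_val (abs_tr n (a * x ^ (3 ^ (2 * (k + 1)) + 1) - x ^ (3 ^ (2 * k) + 1))))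
        = (\<Sum>y\<in>UNIV. H (y^2))"
  proof -
    have "(\<Sum>x\<in>UNIV. omega ^ gf3_val (abs_tr n (a * x ^ (3 ^ (2 * (k + 1)) + 1) - x ^ (3 ^ (2 * k) + 1))))
        = (\<Sum>x\<in>UNIV. H ((x ^ e') ^ 2))"
    proof (rule sum.cong[OF refl])
      fix x :: 'a
      have "a * x ^ (3 ^ (2 * (k + 1)) + 1) - x ^ (3 ^ (2 * k) + 1) = a * (x ^ e') ^ 2 - ((x ^ e') ^ 2) ^ d"
        by (simp only: powD[symmetric] powE)
      thus "omega ^ gf3_val (abs_tr n (a * x ^ (3 ^ (2 * (k + 1)) + 1) - x ^ (3 ^ (2 * k) + 1))) = H ((x ^ e') ^ 2)"
        unfolding H_def by simp
    qed
    also have "\<dots> = (\<Sum>y\<in>UNIV. H (y^2))"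
      by (rule sum.reindex_bij_betw[OF phi_bij, of "\<lambda>y. H (y^2)"])
    finally show ?thesis .
  qed
  have Q2: "(\<Sum>x\<in>UNIV. omega ^ gf3_val (abs_tr n (a * r * x ^ (3 ^ (2 * (k + 1)) + 1) - r ^ d * x ^ (3 ^ (2 * k) + 1))))
        = (\<Sum>y\<in>UNIV. H (r * y^2))"
  proof -
    have "(\<Sum>x\<in>UNIV. omega ^ gf3_val (abs_tr n (a * r * x ^ (3 ^ (2 * (k + 1)) + 1) - r ^ d * x ^ (3 ^ (2 * k) + 1))))
        = (\<Sum>x\<in>UNIV. H (r * (x ^ e') ^ 2))"
    proof (rule sum.cong[OF refl])
      fix x :: 'a
      have "a * r * x ^ (3 ^ (2 * (k + 1)) + 1) - r ^ d * x ^ (3 ^ (2 * k) + 1) = a * (r * (x ^ e') ^ 2) - r ^ d * ((x ^ e') ^ 2) ^ d"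
        by (simp only: powD[symmetric] powE mult.assoc)
      also have "\<dots> = a * (r * (x ^ e') ^ 2) - (r * (x ^ e') ^ 2) ^ d"
        by (simp only: power_mult_distrib)
      finally show "omega ^ gf3_val (abs_tr n (a * r * x ^ (3 ^ (2 * (k + 1)) + 1) - r ^ d * x ^ (3 ^ (2 * k) + 1))) = H (r * (x ^ e') ^ 2)"
        unfolding H_def by simp
    qed
    also have "\<dots> = (\<Sum>y\<in>UNIV. H (r * y^2))"
      by (rule sum.reindex_bij_betw[OF phi_bij, of "\<lambda>y. H (r * y^2)"])
    finally show ?thesis .
  qed
  have r0: "r \<noteq> 0" using assms(8) by force
  obtain j where rj: "r = \<alpha> ^ j" using p r0 unfolding primitive_elem_def by blast
  have oj: "odd j"
  proof
    assume ej: "even j"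
    have a0: "\<alpha> \<noteq> 0" by (rule alpha_nz[OF c3 p])
    have "\<alpha> ^ (80 * j) * \<alpha> ^ j = \<alpha> ^ j"
    proof -
      have "\<alpha> ^ (80 * j) * \<alpha> ^ j = (\<alpha> ^ j) ^ (3^4)" by (simp add: power_add[symmetric] power_mult[symmetric] mult.commute)
      thus ?thesis using assms(7) rj by simp
    qed
    hence "\<alpha> ^ (80 * j) = 1" using a0 by simp
    hence "N dvd 80 * j" using alpha_one_dvd[OF c3 p] N_def by simp
    moreover have NM': "N = 80 * (80 * z^2 + 18 * z + 1)" using NN by simp
    ultimately have "80 * (80 * z^2 + 18 * z + 1) dvd 80 * j" by metis
    hence "(80 * z^2 + 18 * z + 1) dvd j" using nat_mult_dvd_cancel1[of 80 "80 * z^2 + 18 * z + 1" j] by (simp only: zero_less_numeral simp_thms)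
    then obtain t where jt: "j = (80 * z^2 + 18 * z + 1) * t" by blast
    have "odd (80 * z^2 + 18 * z + 1)" by simp
    hence "even t" using ej jt by simp
    then obtain c where tc: "t = 2 * c" by blast
    define y where "y = \<alpha> ^ ((80 * z^2 + 18 * z + 1) * c)"
    have "y ^ 2 = r" unfolding y_def rj jt tc by (simp add: power_mult[symmetric] algebra_simps)
    moreover have "y ^ (3^4) = y"
    proof -
      have "y ^ (3^4) = y * (\<alpha> ^ N) ^ c" unfolding y_def NM'
        by (simp add: power_mult[symmetric] power_add[symmetric] algebra_simps)
      thus ?thesis using xN[OF a0] by simp
    qed
    ultimately show False using assms(8) by blast
  qed
  define M where "M = 3200 * z^2 + 720 * z + 40"
  have NM: "card (UNIV::'a set) - 1 = 2 * M" using NN N_def M_def by simp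
  have P2: "2 * (\<Sum>x\<in>UNIV. H x) = (\<Sum>y\<in>UNIV. H (y^2)) + (\<Sum>y\<in>UNIV. H (r * y^2))"
    using sq_split[OF c3 p NM rj oj, of H] by simp
  show ?thesis
    unfolding Let_def a_def[symmetric]
    using P1 P2 Q1 Q2 unfolding H_def by simp
qed


end
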